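(* Let $E$ be a finite dimensional real vector space and $g(t,s,z)$ a smooth function from a neighborhood of $(0,0,z_0)$ in $\mathbb{R}^2\times E$ to a normed space $F$. Define $$f(t,z)=\begin{cases} g(t,t\log|t|,z)&\text{if } t\neq0,\\ g(0,0,z)&\text{if } t=0.\end{cases}$$ Assume that $g(0,s,z)$ only depends on $z$. Then $f$ is of class $C^1$ and $$df(0,z)=\frac{\partial g}{\partial t}(0,0,z)\,dt+d_zg(0,0,z).$$ *)

theory Defs
  imports "HOL-Analysis.Analysis"
begin

fun iter_deriv :: "('a::real_normed_vector \<Rightarrow> 'b::real_normed_vector) \<Rightarrow> 'a list \<Rightarrow> 'a \<Rightarrow> 'b" where
  "iter_deriv f [] = f"
| "iter_deriv f (v # vs) = (\<lambda>x. frechet_derivative (iter_deriv f vs) (at x) v)"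

definition smooth_on :: "'a::euclidean_space set \<Rightarrow> ('a \<Rightarrow> 'b::real_normed_vector) \<Rightarrow> bool" where
  "smooth_on U f \<longleftrightarrow> open U \<and> (\<forall>vs. iter_deriv f vs differentiable_on U)"

definition C1_on :: "'a::real_normed_vector set \<Rightarrow> ('a \<Rightarrow> 'b::real_normed_vector) \<Rightarrow> bool" where
  "C1_on V f \<longleftrightarrow> (\<exists>f'. (\<forall>x\<in>V. (f has_derivative blinfun_apply (f' x)) (at x)) \<and> continuous_on V f')"

definition tlog_comp :: "(real \<times> real \<times> 'e \<Rightarrow> 'f) \<Rightarrow> real \<times> 'e \<Rightarrow> 'f" where
  "tlog_comp g = (\<lambda>(t, z). if t = 0 then g (0, 0, z) else g (t, t * ln \<bar>t\<bar>, z))"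

end

theory Submission imports Defs "HOL-Real_Asymp.Real_Asymp" begin

lemma tlog_tendsto: "((\<lambda>t::real. t * ln \<bar>t\<bar>) \<longlongrightarrow> 0) (at 0)"
  by (rule filterlim_split_at; real_asymp)

lemma tlog_isCont: "isCont (\<lambda>t::real. t * ln \<bar>t\<bar>) t"
proof (cases "t = 0")
  case True thus ?thesis using tlog_tendsto by (simp add: isCont_def)
next
  case False thus ?thesis by (intro continuous_intros) auto
qed

lemma tlog_cont: "continuous_on A (\<lambda>t::real. t * ln \<bar>t\<bar>)"
  using tlog_isCont by (simp add: continuous_at_imp_continuous_on)

lemma tlog_deriv:
  assumes "t \<noteq> 0"
  shows "((\<lambda>t::real. t * ln \<bar>t\<bar>) has_real_derivative (ln\<bar>t\<bar> + 1)) (at t)"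
proof (cases "t > 0")
  case True
  have "((\<lambda>t::real. t * ln t) has_real_derivative (ln t + 1)) (at t)"
    using True by (auto intro!: derivative_eq_intros)
  from has_field_derivative_transform_within_open[OF this, of "{0<..}"] True
  show ?thesis by auto
next
  case False
  hence n: "t < 0" using assms by auto
  have "((\<lambda>t::real. t * ln (-t)) has_real_derivative (ln (-t) + 1)) (at t)"
    using n by (auto intro!: derivative_eq_intros)
  from has_field_derivative_transform_within_open[OF this, of "{..<0}"] n
  show ?thesis by auto
qed

lemma mvt_real:
  fixes \<psi> :: "real \<Rightarrow> 'b::real_normed_vector"
  assumes "convex S" "\<And>\<tau>. \<tau>\<in>S \<Longrightarrow> (\<psi> has_derivative (\<lambda>h. h *\<^sub>R \<psi>' \<tau>)) (at \<tau>)"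
    "\<And>\<tau>. \<tau>\<in>S \<Longrightarrow> norm (\<psi>' \<tau>) \<le> B" "a\<in>S" "b\<in>S"
  shows "norm (\<psi> b - \<psi> a) \<le> B * \<bar>b - a\<bar>"
proof -
  have "norm (\<psi> b - \<psi> a) \<le> B * norm (b - a)"
  proof (rule differentiable_bound[OF assms(1)])
    show "(\<psi> has_derivative (\<lambda>h. h *\<^sub>R \<psi>' x)) (at x within S)" if "x \<in> S" for x
      using assms(2)[OF that] by (rule has_derivative_at_withinI)
    show "onorm (\<lambda>h. h *\<^sub>R \<psi>' x) \<le> B" if "x \<in> S" for x
      using onorm_scaleR_left[of "\<lambda>x. x" "\<psi>' x"] assms(3)[OF that] by (simp add: onorm_id)
  qed (use assms in auto)
  thus ?thesis by simp
qed

lemma line_deriv: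
  assumes "(F has_derivative F') (at (a + t *\<^sub>R v))"
  shows "((\<lambda>u. F (a + u *\<^sub>R v)) has_derivative (\<lambda>h. h *\<^sub>R F' v)) (at t)"
proof -
  have l: "linear F'" using assms has_derivative_linear by blast
  have "((\<lambda>u. a + u *\<^sub>R v) has_derivative (\<lambda>h. h *\<^sub>R v)) (at t)"
    by (auto intro!: derivative_eq_intros)
  from diff_chain_at[OF this assms] show ?thesis
    by (simp add: o_def linear_cmul[OF l])
qed

theorem proposition24:
  fixes g :: "real \<times> real \<times> 'e::euclidean_space \<Rightarrow> 'f::real_normed_vector"
    and U :: "(real \<times> real \<times> 'e) set" and z0 :: 'e
  assumes "open U" and "(0, 0, z0) \<in> U"
    and "smooth_on U g"
    and "\<And>s s' z. (0, s, z) \<in> U \<Longrightarrow> (0, s', z) \<in> U \<Longrightarrow> g (0, s, z) = g (0, s', z)"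
  shows "\<exists>V. open V \<and> (0, z0) \<in> V \<and>
           (\<forall>t z. (t, z) \<in> V \<longrightarrow> (t, t * ln \<bar>t\<bar>, z) \<in> U) \<and>
           C1_on V (tlog_comp g) \<and>
           (\<forall>z. (0, z) \<in> V \<longrightarrow>
              (tlog_comp g has_derivative
                 (\<lambda>(dt, dz). dt *\<^sub>R frechet_derivative g (at (0, 0, z)) (1, 0, 0)
                            + frechet_derivative g (at (0, 0, z)) (0, 0, dz)))
                (at (0, z)))"
proof -
  define g' where "g' x = frechet_derivative g (at x)" for x
  define gs where "gs x = g' x (0,1,0)" for x
  define gt where "gt x = g' x (1,0,0)" for x
  define gts where "gts x = frechet_derivative gs (at x) (1,0,0)" for x
  have sm: "\<And>vs. iter_deriv g vs differentiable_on U" using assms(3) by (simp add: smooth_on_def)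
  have dg: "(g has_derivative g' x) (at x)" if "x \<in> U" for x
  proof -
    have "g differentiable_on U" using sm[of "[]"] by simp
    hence "g differentiable (at x)" using that assms(1) differentiable_on_eq_differentiable_at by blast
    thus ?thesis unfolding g'_def using frechet_derivative_works by blast
  qed
  have dv: "(\<lambda>x. g' x v) differentiable_on U" for v using sm[of "[v]"] by (simp add: g'_def)
  have cv: "continuous_on U (\<lambda>x. g' x v)" for v using dv differentiable_imp_continuous_on by blast
  have gs_eq: "gs = (\<lambda>x. g' x (0,1,0))" by (simp add: gs_def fun_eq_iff)
  have dgs: "(gs has_derivative frechet_derivative gs (at x)) (at x)" if "x\<in>U" for x
  proof -
    have "gs differentiable (at x)" using dv[of "(0,1,0)"] that assms(1)
      unfolding gs_eq using differentiable_on_eq_differentiable_at by blast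
    thus ?thesis using frechet_derivative_works by blast
  qed
  have cgts: "continuous_on U gts"
  proof -
    have "(\<lambda>x. frechet_derivative gs (at x) (1,0,0)) differentiable_on U"
      using sm[of "[(1,0,0),(0,1,0)]"] unfolding gs_eq g'_def by simp
    thus ?thesis unfolding gts_def[abs_def] using differentiable_imp_continuous_on by blast
  qed
  obtain R where R: "R > 0" "cball (0,0,z0) R \<subseteq> U" using assms(1,2) open_contains_cball by blast
  define r where "r = R / 3"
  have r: "r > 0" using R by (simp add: r_def)
  define K where "K = cball (0::real) r \<times> (cball (0::real) r \<times> cball z0 r)"
  have memK: "(t,s,z) \<in> K \<longleftrightarrow> \<bar>t\<bar> \<le> r \<and> \<bar>s\<bar> \<le> r \<and> dist z z0 \<le> r" for t s z
    by (auto simp: K_def dist_commute)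
  have KU: "K \<subseteq> U"
  proof
    fix x assume "x \<in> K"
    then obtain t s z where x: "x = (t,s,z)" "\<bar>t\<bar> \<le> r" "\<bar>s\<bar> \<le> r" "dist z z0 \<le> r"
      using memK by (cases x) auto
    have "dist (0,0,z0) x = norm (t, s, z - z0)" unfolding x(1) by (subst dist_commute) (simp add: dist_norm)
    also have "\<dots> \<le> norm t + (norm s + norm (z - z0))"
      by (meson add_left_mono norm_Pair_le order_trans)
    also have "\<dots> \<le> R" using x by (simp add: r_def dist_norm)
    finally show "x \<in> U" using R by auto
  qed
  have cK: "compact K" "convex K" by (auto simp: K_def intro!: compact_Times convex_Times)
  obtain B1 where B1: "B1 > 0" "\<And>x. x \<in> K \<Longrightarrow> norm (gts x) \<le> B1"
  proof -
    have "compact (gts ` K)" using cK(1) continuous_on_subset[OF cgts KU] compact_continuous_image by blast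
    then obtain b where "b > 0" "\<forall>y\<in>gts ` K. norm y \<le> b" using compact_imp_bounded bounded_pos by metis
    thus ?thesis using that by auto
  qed
  have gs0: "gs (0,s,z) = 0" if "(0,s,z) \<in> U" for s z
  proof -
    define W where "W = {u. (0,s+u,z) \<in> U}"
    have oW: "open W" unfolding W_def
      by (rule open_vimage[OF assms(1), unfolded vimage_def]) (auto intro!: continuous_intros)
    have h0: "(0,s,z) + 0 *\<^sub>R (0,1,0) \<in> U" using that by simp
    have d1: "((\<lambda>u. g (0,s+u,z)) has_derivative (\<lambda>h. h *\<^sub>R g' (0,s,z) (0,1,0))) (at 0)"
      using line_deriv[OF dg[OF h0]] by simp
    have d2: "((\<lambda>u. g (0,s+u,z)) has_derivative (\<lambda>h. 0)) (at 0)"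
    proof (rule has_derivative_transform_within_open[OF has_derivative_const oW])
      show "0 \<in> W" using that by (simp add: W_def)
      fix u assume "u \<in> W"
      thus "g (0,s,z) = g (0,s+u,z)" using assms(4)[OF that] by (simp add: W_def)
    qed
    have "(\<lambda>h. h *\<^sub>R g' (0,s,z) (0,1,0)) = (\<lambda>h::real. 0)" using has_derivative_unique[OF d1 d2] .
    hence "1 *\<^sub>R g' (0,s,z) (0,1,0) = 0" by meson
    thus ?thesis by (simp add: gs_def)
  qed
  have gsB: "norm (gs (t,s,z)) \<le> B1 * \<bar>t\<bar>" if "(t,s,z) \<in> K" for t s z
  proof -
    have "norm (gs ((0,s,z) + t *\<^sub>R (1,0,0)) - gs ((0,s,z) + 0 *\<^sub>R (1,0,0))) \<le> B1 * \<bar>t - 0\<bar>"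
    proof (rule mvt_real[where S="cball 0 r"])
      fix \<tau> :: real assume "\<tau> \<in> cball 0 r"
      hence "(\<tau>,s,z) \<in> K" using that memK by auto
      hence h: "(0,s,z) + \<tau> *\<^sub>R (1,0,0) \<in> U" using KU by auto
      show "((\<lambda>u. gs ((0,s,z) + u *\<^sub>R (1,0,0))) has_derivative (\<lambda>h. h *\<^sub>R gts ((0,s,z) + \<tau> *\<^sub>R (1,0,0)))) (at \<tau>)"
        using line_deriv[OF dgs[OF h]] by (simp only: gts_def)
      show "norm (gts ((0,s,z) + \<tau> *\<^sub>R (1,0,0))) \<le> B1" using B1 \<open>(\<tau>,s,z) \<in> K\<close> by simp
    qed (use that memK in auto)
    moreover have "gs (0,s,z) = 0" using gs0[of s z] KU memK[of 0 s z] memK[of t s z] that r by auto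
    ultimately show ?thesis by simp
  qed
  have EB: "norm (g (t,\<sigma>,z) - g (t,0,z)) \<le> B1 * \<bar>t\<bar> * \<bar>\<sigma>\<bar>"
    if "\<bar>t\<bar> \<le> r" "\<bar>\<sigma>\<bar> \<le> r" "dist z z0 \<le> r" for t \<sigma> z
  proof -
    have "norm (g ((t,0,z) + \<sigma> *\<^sub>R (0,1,0)) - g ((t,0,z) + 0 *\<^sub>R (0,1,0))) \<le> (B1 * \<bar>t\<bar>) * \<bar>\<sigma> - 0\<bar>"
    proof (rule mvt_real[where S="cball 0 r"])
      fix u :: real assume "u \<in> cball 0 r"
      hence "(t,u,z) \<in> K" using that memK by auto
      hence h: "(t,0,z) + u *\<^sub>R (0,1,0) \<in> U" using KU by auto
      show "((\<lambda>u. g ((t,0,z) + u *\<^sub>R (0,1,0))) has_derivative (\<lambda>h. h *\<^sub>R gs ((t,0,z) + u *\<^sub>R (0,1,0)))) (at u)"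
        using line_deriv[OF dg[OF h]] by (simp only: gs_def)
      show "norm (gs ((t,0,z) + u *\<^sub>R (0,1,0))) \<le> B1 * \<bar>t\<bar>" using gsB \<open>(t,u,z) \<in> K\<close> by simp
    qed (use that in auto)
    thus ?thesis by simp
  qed
  obtain d where d: "d > 0" "\<And>t::real. t \<noteq> 0 \<Longrightarrow> \<bar>t\<bar> < d \<Longrightarrow> \<bar>t * ln \<bar>t\<bar>\<bar> < r"
  proof -
    have "eventually (\<lambda>t. dist (t * ln \<bar>t\<bar>) 0 < r) (at (0::real))"
      using tlog_tendsto r unfolding tendsto_iff by blast
    then obtain d where "d > 0" "\<forall>t::real. t \<noteq> 0 \<and> dist t 0 < d \<longrightarrow> dist (t * ln \<bar>t\<bar>) 0 < r"
      unfolding eventually_at by (auto simp: dist_real_def real_norm_def)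
    thus ?thesis using that by (auto simp: dist_real_def)
  qed
  define \<delta> where "\<delta> = min d r"
  define V where "V = ball (0::real) \<delta> \<times> ball z0 r"
  have oV: "open V" by (simp add: V_def open_Times)
  have memV: "\<bar>t\<bar> < r \<and> \<bar>t * ln \<bar>t\<bar>\<bar> < r \<and> dist z z0 < r" if "(t,z) \<in> V" for t z
  proof -
    have "\<bar>t\<bar> < \<delta>" "dist z z0 < r" using that by (auto simp: V_def dist_commute)
    thus ?thesis using d r by (cases "t = 0") (auto simp: \<delta>_def)
  qed
  have z0V: "(0, z0) \<in> V" using d r by (simp add: V_def \<delta>_def)
  define \<gamma> where "\<gamma> p = (fst p, fst p * ln \<bar>fst p\<bar>, snd p)" for p :: "real \<times> 'e"
  have \<gamma>K: "\<gamma> p \<in> K" "(fst p, 0, snd p) \<in> K" if "p \<in> V" for p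
    using memV[of "fst p" "snd p"] that memK r by (auto simp: \<gamma>_def)
  have \<gamma>U: "\<gamma> p \<in> U" if "p \<in> V" for p using \<gamma>K[OF that] KU by auto
  have fdef: "tlog_comp g = (\<lambda>p. g (\<gamma> p))"
    by (auto simp: tlog_comp_def \<gamma>_def fun_eq_iff)
  have c\<gamma>: "continuous_on A \<gamma>" for A
    unfolding \<gamma>_def
    by (intro continuous_intros continuous_on_compose2[OF tlog_cont continuous_on_fst]) auto
  have lin: "linear (g' x)" if "x \<in> U" for x using dg[OF that] has_derivative_linear by blast
  have expd: "g' x (h,k,w) = h *\<^sub>R gt x + k *\<^sub>R gs x + g' x (0,0,w)" if "x \<in> U" for x h k w
  proof -
    have "(h,k,w) = h *\<^sub>R (1,0,0) + k *\<^sub>R (0,1,0) + (0,0,w)" by simp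
    hence "g' x (h,k,w) = g' x (h *\<^sub>R (1,0,0) + k *\<^sub>R (0,1,0) + (0,0,w))" by simp
    also have "\<dots> = h *\<^sub>R gt x + k *\<^sub>R gs x + g' x (0,0,w)"
      by (simp only: linear_add[OF lin[OF that]] linear_cmul[OF lin[OF that]] gt_def gs_def)
    finally show ?thesis .
  qed
  define a where "a p = gt (\<gamma> p) + (ln \<bar>fst p\<bar> + 1) *\<^sub>R gs (\<gamma> p)" for p
  define Dfun where "Dfun p = (\<lambda>q. fst q *\<^sub>R a p + g' (\<gamma> p) (0,0,snd q))" for p
  have D: "(tlog_comp g has_derivative Dfun p) (at p)" if pV: "p \<in> V" for p
  proof (cases "fst p = 0")
    case False
    define t where "t = fst p"
    have d1: "((\<lambda>t. t * ln \<bar>t\<bar>) has_derivative (\<lambda>h. (ln \<bar>t\<bar> + 1) * h)) (at (fst p))"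
      using tlog_deriv[OF False] by (simp add: has_field_derivative_def t_def)
    have d3: "((\<lambda>x. fst x * ln \<bar>fst x\<bar>) has_derivative (\<lambda>x. (ln \<bar>t\<bar> + 1) * fst x)) (at p)"
      using diff_chain_at[OF has_derivative_fst[OF has_derivative_ident] d1] by (simp add: o_def)
    have d\<gamma>: "(\<gamma> has_derivative (\<lambda>q. (fst q, (ln \<bar>t\<bar> + 1) * fst q, snd q))) (at p)"
      unfolding \<gamma>_def
      by (intro has_derivative_Pair has_derivative_fst[OF has_derivative_ident]
            has_derivative_snd[OF has_derivative_ident] d3)
    from diff_chain_at[OF d\<gamma> dg[OF \<gamma>U[OF pV]]]
    have "((\<lambda>p. g (\<gamma> p)) has_derivative (\<lambda>q. g' (\<gamma> p) (fst q, (ln \<bar>t\<bar> + 1) * fst q, snd q))) (at p)"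
      by (simp add: o_def)
    moreover have "(\<lambda>q. g' (\<gamma> p) (fst q, (ln \<bar>t\<bar> + 1) * fst q, snd q)) = Dfun p"
    proof
      fix q :: "real \<times> 'e"
      have "g' (\<gamma> p) (fst q, (ln \<bar>t\<bar> + 1) * fst q, snd q) = fst q *\<^sub>R gt (\<gamma> p) + ((ln \<bar>t\<bar> + 1) * fst q) *\<^sub>R gs (\<gamma> p) + g' (\<gamma> p) (0,0,snd q)"
        by (rule expd[OF \<gamma>U[OF pV]])
      also have "\<dots> = Dfun p q"
        by (simp add: Dfun_def a_def t_def scaleR_add_right mult.commute)
      finally show "g' (\<gamma> p) (fst q, (ln \<bar>t\<bar> + 1) * fst q, snd q) = Dfun p q" .
    qed
    ultimately show ?thesis unfolding fdef by (rule has_derivative_eq_rhs)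
  next
    case True
    obtain z where p: "p = (0, z)" using True by (cases p) auto
    define \<iota> where "\<iota> q = (fst q, 0::real, snd q)" for q :: "real \<times> 'e"
    have \<gamma>p: "\<gamma> p = (0,0,z)" "\<iota> p = (0,0,z)" by (simp_all add: p \<gamma>_def \<iota>_def)
    have d\<iota>: "(\<iota> has_derivative \<iota>) (at p)"
      unfolding \<iota>_def
      by (intro has_derivative_Pair has_derivative_fst[OF has_derivative_ident]
            has_derivative_snd[OF has_derivative_ident] has_derivative_const)
    have dG: "((\<lambda>q. g (\<iota> q)) has_derivative (\<lambda>q. g' (0,0,z) (\<iota> q))) (at p)"
      using diff_chain_at[OF d\<iota> dg[OF \<gamma>U[OF pV, unfolded \<gamma>p(1)], folded \<gamma>p(2)]] by (simp add: o_def \<gamma>p)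
    define E where "E q = g (\<gamma> q) - g (\<iota> q)" for q
    have Ep: "E p = 0" by (simp add: E_def \<gamma>p)
    have Ebound: "norm (E y) / norm (y - p) \<le> B1 * \<bar>fst y * ln \<bar>fst y\<bar>\<bar>" if yV: "y \<in> V" for y
    proof -
      obtain t' z' where y: "y = (t', z')" by (cases y)
      have m: "\<bar>t'\<bar> < r" "\<bar>t' * ln \<bar>t'\<bar>\<bar> < r" "dist z' z0 < r" using memV yV y by auto
      have E1: "norm (E y) \<le> B1 * \<bar>t'\<bar> * \<bar>t' * ln \<bar>t'\<bar>\<bar>"
        using EB[of t' "t' * ln \<bar>t'\<bar>" z'] m by (simp add: E_def y \<gamma>_def \<iota>_def)
      have n: "\<bar>t'\<bar> \<le> norm (y - p)" using norm_fst_le[of "t'" "z' - z"] by (simp add: y p)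
      show ?thesis
      proof (cases "t' = 0")
        case True thus ?thesis using E1 B1 by (simp add: y)
      next
        case False
        hence np: "norm (y - p) > 0" using n by auto
        have "norm (E y) \<le> B1 * \<bar>t' * ln \<bar>t'\<bar>\<bar> * norm (y - p)"
        proof -
          have "B1 * \<bar>t'\<bar> * \<bar>t' * ln \<bar>t'\<bar>\<bar> \<le> B1 * \<bar>t' * ln \<bar>t'\<bar>\<bar> * norm (y - p)"
            using mult_left_mono[OF n, of "B1 * \<bar>t' * ln \<bar>t'\<bar>\<bar>"] B1 by (simp add: mult_ac)
          thus ?thesis by (rule order_trans[OF E1])
        qed
        thus ?thesis using np by (simp add: y pos_divide_le_eq)
      qed
    qed
    have tl0: "((\<lambda>y. fst y * ln \<bar>fst y\<bar>) \<longlongrightarrow> 0) (at p)"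
    proof -
      have "((\<lambda>y::real\<times>'e. fst y) \<longlongrightarrow> 0) (at p)"
        using tendsto_fst[OF tendsto_ident_at[of p UNIV]] by (simp add: p)
      from isCont_tendsto_compose[OF tlog_isCont this] show ?thesis by simp
    qed
    have dE: "(E has_derivative (\<lambda>_. 0)) (at p)"
      unfolding has_derivative_iff_norm
    proof (intro conjI)
      show "bounded_linear (\<lambda>_::real\<times>'e. 0::'f)" by (rule bounded_linear_zero)
      show "((\<lambda>y. norm (E y - E p - 0) / norm (y - p)) \<longlongrightarrow> 0) (at p)"
      proof (rule Lim_null_comparison)
        show "\<forall>\<^sub>F y in at p. norm (norm (E y - E p - 0) / norm (y - p)) \<le> B1 * \<bar>fst y * ln \<bar>fst y\<bar>\<bar>"
          using eventually_at_in_open'[OF oV pV] by eventually_elim (use Ebound Ep in simp)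
        show "((\<lambda>y. B1 * \<bar>fst y * ln \<bar>fst y\<bar>\<bar>) \<longlongrightarrow> 0) (at p)"
          using tendsto_mult[OF tendsto_const tendsto_rabs_zero[OF tl0], of B1] by simp
      qed
    qed
    have feq: "tlog_comp g = (\<lambda>q. g (\<iota> q) + E q)" by (simp add: fdef E_def fun_eq_iff)
    have U00: "(0,0,z) \<in> U" using \<gamma>U[OF pV] \<gamma>p(1) by simp
    have gs00: "gs (0,0,z) = 0" by (rule gs0[OF U00])
    have "(\<lambda>q. g' (0,0,z) (\<iota> q) + 0) = Dfun p"
    proof
      fix q :: "real \<times> 'e"
      have "g' (0,0,z) (\<iota> q) = fst q *\<^sub>R gt (0,0,z) + 0 *\<^sub>R gs (0,0,z) + g' (0,0,z) (0,0,snd q)"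
        unfolding \<iota>_def by (rule expd[OF U00])
      hence "g' (0,0,z) (\<iota> q) + 0 = fst q *\<^sub>R gt (0,0,z) + 0 *\<^sub>R gs (0,0,z) + g' (0,0,z) (0,0,snd q)"
        by simp
      also have "\<dots> = Dfun p q"
        unfolding Dfun_def a_def \<gamma>p(1) by (simp add: gs00 p)
      finally show "g' (0,0,z) (\<iota> q) + 0 = Dfun p q" .
    qed
    with has_derivative_add[OF dG dE] show ?thesis unfolding feq by simp
  qed
  have bl: "bounded_linear (Dfun p)" if "p \<in> V" for p using D[OF that] has_derivative_bounded_linear by blast
  have cg'\<gamma>: "continuous_on V (\<lambda>x. g' (\<gamma> x) w)" for w
    by (rule continuous_on_compose2[OF cv c\<gamma>]) (use \<gamma>U in auto)
  have cgs\<gamma>: "isCont (\<lambda>x. gs (\<gamma> x)) p" if "p \<in> V" for p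
    using cg'\<gamma>[of "(0,1,0)"] oV that by (simp add: gs_def continuous_on_eq_continuous_at)
  have ch: "continuous_on V (\<lambda>x. (ln \<bar>fst x\<bar> + 1) *\<^sub>R gs (\<gamma> x))"
    unfolding continuous_on_eq_continuous_at[OF oV]
  proof
    fix p assume pV: "p \<in> V"
    show "isCont (\<lambda>x. (ln \<bar>fst x\<bar> + 1) *\<^sub>R gs (\<gamma> x)) p"
    proof (cases "fst p = 0")
      case False
      have "isCont (\<lambda>x. ln \<bar>fst x\<bar> + 1) p" using False by (intro continuous_intros) auto
      thus ?thesis using cgs\<gamma>[OF pV] by (rule continuous_scaleR)
    next
      case True
      obtain z where p: "p = (0, z)" using True by (cases p) auto
      have gs00: "gs (\<gamma> p) = 0" using gs0 \<gamma>U[OF pV] by (simp add: \<gamma>_def p)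
      have tl1: "((\<lambda>y. fst y * ln \<bar>fst y\<bar> + fst y) \<longlongrightarrow> 0) (at p)"
      proof -
        have f0: "((\<lambda>y::real\<times>'e. fst y) \<longlongrightarrow> 0) (at p)"
          using tendsto_fst[OF tendsto_ident_at[of p UNIV]] by (simp add: p)
        from tendsto_add[OF isCont_tendsto_compose[OF tlog_isCont f0] f0] show ?thesis by simp
      qed
      have "((\<lambda>x. (ln \<bar>fst x\<bar> + 1) *\<^sub>R gs (\<gamma> x)) \<longlongrightarrow> 0) (at p)"
      proof (rule Lim_null_comparison)
        show "\<forall>\<^sub>F y in at p. norm ((ln \<bar>fst y\<bar> + 1) *\<^sub>R gs (\<gamma> y)) \<le> B1 * \<bar>fst y * ln \<bar>fst y\<bar> + fst y\<bar>"
          using eventually_at_in_open'[OF oV pV]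
        proof eventually_elim
          case (elim y)
          have "norm (gs (\<gamma> y)) \<le> B1 * \<bar>fst y\<bar>"
            using gsB[of "fst y" "fst y * ln \<bar>fst y\<bar>" "snd y"] \<gamma>K[OF elim] by (simp add: \<gamma>_def)
          hence "\<bar>ln \<bar>fst y\<bar> + 1\<bar> * norm (gs (\<gamma> y)) \<le> \<bar>ln \<bar>fst y\<bar> + 1\<bar> * (B1 * \<bar>fst y\<bar>)"
            by (rule mult_left_mono) simp
          also have "\<dots> = B1 * \<bar>fst y * ln \<bar>fst y\<bar> + fst y\<bar>"
            using B1 by (simp add: abs_mult[symmetric] algebra_simps)
          finally show ?case by simp
        qed
        show "((\<lambda>y. B1 * \<bar>fst y * ln \<bar>fst y\<bar> + fst y\<bar>) \<longlongrightarrow> 0) (at p)"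
          using tendsto_mult[OF tendsto_const tendsto_rabs_zero[OF tl1], of B1] by simp
      qed
      thus ?thesis using gs00 by (simp add: isCont_def p \<gamma>_def)
    qed
  qed
  have cD: "continuous_on V (\<lambda>x. Dfun x i)" for i
    unfolding Dfun_def a_def gt_def
    by (intro continuous_intros cg'\<gamma> ch)
  have C1: "C1_on V (tlog_comp g)"
    unfolding C1_on_def
  proof (intro exI[of _ "\<lambda>p. Blinfun (Dfun p)"] conjI ballI)
    show "(tlog_comp g has_derivative blinfun_apply (Blinfun (Dfun x))) (at x)" if "x \<in> V" for x
      using D[OF that] bounded_linear_Blinfun_apply[OF bl[OF that]] by simp
    show "continuous_on V (\<lambda>p. Blinfun (Dfun p))"
    proof (rule continuous_on_blinfun_componentwise)
      fix i :: "real \<times> 'e"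
      show "continuous_on V (\<lambda>x. blinfun_apply (Blinfun (Dfun x)) i)"
        using cD[of i] by (rule continuous_on_cong[THEN iffD1, rotated 2])
          (auto simp: bounded_linear_Blinfun_apply[OF bl])
    qed
  qed
  show ?thesis
  proof (intro exI[of _ V] conjI allI impI oV z0V C1)
    fix t z assume "(t, z) \<in> V"
    thus "(t, t * ln \<bar>t\<bar>, z) \<in> U" using \<gamma>U[of "(t,z)"] by (simp add: \<gamma>_def)
  next
    fix z assume zV: "(0, z) \<in> V"
    have gs00: "gs (0,0,z) = 0" using gs0 \<gamma>U[OF zV] by (simp add: \<gamma>_def)
    show "(tlog_comp g has_derivative
           (\<lambda>(dt, dz). dt *\<^sub>R frechet_derivative g (at (0, 0, z)) (1, 0, 0)
                     + frechet_derivative g (at (0, 0, z)) (0, 0, dz))) (at (0, z))"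
      using D[OF zV] by (rule has_derivative_eq_rhs)
        (auto simp: fun_eq_iff Dfun_def a_def \<gamma>_def gs00 gt_def g'_def)
  qed
qed
end
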